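(* Let $d$ be a positive integer and $p\in[0,1]$. Then every cubic graph $G$ of girth at least $2d+1$ satisfies $$\gamma_e(G)\leq\frac{3}{2}\left(p+e^{-pd}\right)n(G).$$
   Context: All graphs are finite, simple and undirected; $n(G)=|V(G)|$; a graph is cubic if every vertex has degree $3$. For a graph $G$, a set $S\subseteq V(G)$, and vertices $u,v$ with $u\in S$ or $v\in S$, ${\rm dist}_{(G,S)}(u,v)$ is the minimum number of edges of a path $P$ in $G$ between $u$ and $v$ such that $S$ contains exactly one endvertex of $P$ and no internal vertex of $P$, and $\infty$ if no such path exists (so ${\rm dist}_{(G,S)}(u,u)=0$ for $u\in S$). For $u\in V(G)$, $w_{(G,S)}(u)=\sum_{v\in S}(1/2)^{{\rm dist}_{(G,S)}(u,v)-1}$ with $(1/2)^{\infty}=0$. $S$ is an exponential dominating set of $G$ if $w_{(G,S)}(u)\geq 1$ for every $u\in V(G)$, and $\gamma_e(G)$ is the minimum cardinality of an exponential dominating set of $G$. *)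

theory Defs
  imports Complex_Main "HOL-Library.Extended_Nat"
begin

definition simple_graph :: "'a set \<Rightarrow> ('a \<Rightarrow> 'a \<Rightarrow> bool) \<Rightarrow> bool" where
  "simple_graph V E \<longleftrightarrow> finite V \<and> (\<forall>x y. E x y \<longrightarrow> E y x) \<and> (\<forall>x. \<not> E x x)
     \<and> (\<forall>x y. E x y \<longrightarrow> x \<in> V \<and> y \<in> V)"

definition cubic :: "'a set \<Rightarrow> ('a \<Rightarrow> 'a \<Rightarrow> bool) \<Rightarrow> bool" where
  "cubic V E \<longleftrightarrow> (\<forall>v\<in>V. card {w \<in> V. E v w} = 3)"

definition is_path :: "'a set \<Rightarrow> ('a \<Rightarrow> 'a \<Rightarrow> bool) \<Rightarrow> 'a list \<Rightarrow> bool" where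
  "is_path V E P \<longleftrightarrow> P \<noteq> [] \<and> set P \<subseteq> V \<and> distinct P
     \<and> (\<forall>i. Suc i < length P \<longrightarrow> E (P ! i) (P ! Suc i))"

text \<open>A cycle is a list of at least 3 distinct vertices, consecutive ones adjacent,
and the last adjacent to the first; its length is the number of vertices (= edges).\<close>
definition is_cycle :: "'a set \<Rightarrow> ('a \<Rightarrow> 'a \<Rightarrow> bool) \<Rightarrow> 'a list \<Rightarrow> bool" where
  "is_cycle V E C \<longleftrightarrow> length C \<ge> 3 \<and> is_path V E C \<and> E (last C) (hd C)"

definition girth_ge :: "'a set \<Rightarrow> ('a \<Rightarrow> 'a \<Rightarrow> bool) \<Rightarrow> nat \<Rightarrow> bool" where
  "girth_ge V E g \<longleftrightarrow> (\<forall>C. is_cycle V E C \<longrightarrow> length C \<ge> g)"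

definition S_path :: "'a set \<Rightarrow> ('a \<Rightarrow> 'a \<Rightarrow> bool) \<Rightarrow> 'a set \<Rightarrow> 'a \<Rightarrow> 'a \<Rightarrow> 'a list \<Rightarrow> bool" where
  "S_path V E S u v P \<longleftrightarrow> is_path V E P \<and> hd P = u \<and> last P = v
     \<and> card ({hd P, last P} \<inter> S) = 1 \<and> set (butlast (tl P)) \<inter> S = {}"

definition dist_S :: "'a set \<Rightarrow> ('a \<Rightarrow> 'a \<Rightarrow> bool) \<Rightarrow> 'a set \<Rightarrow> 'a \<Rightarrow> 'a \<Rightarrow> enat" where
  "dist_S V E S u v = (INF P \<in> {P. S_path V E S u v P}. enat (length P - 1))"

definition weight_S :: "'a set \<Rightarrow> ('a \<Rightarrow> 'a \<Rightarrow> bool) \<Rightarrow> 'a set \<Rightarrow> 'a \<Rightarrow> real" where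
  "weight_S V E S u = (\<Sum>v\<in>S. (case dist_S V E S u v of
       enat k \<Rightarrow> (1/2::real) powi (int k - 1) | \<infinity> \<Rightarrow> 0))"

definition exp_dominating :: "'a set \<Rightarrow> ('a \<Rightarrow> 'a \<Rightarrow> bool) \<Rightarrow> 'a set \<Rightarrow> bool" where
  "exp_dominating V E S \<longleftrightarrow> S \<subseteq> V \<and> (\<forall>u\<in>V. weight_S V E S u \<ge> 1)"

definition gamma_e :: "'a set \<Rightarrow> ('a \<Rightarrow> 'a \<Rightarrow> bool) \<Rightarrow> nat" where
  "gamma_e V E = Min {card S | S. exp_dominating V E S}"

end

theory Submission imports Defs begin

locale cg =
  fixes V :: "'a set" and E :: "'a \<Rightarrow> 'a \<Rightarrow> bool" and d :: nat
  assumes sg: "simple_graph V E" and cub: "cubic V E" and gir: "girth_ge V E (2 * d + 1)"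
    and d1: "d \<ge> 1"
begin

lemma finV: "finite V" using sg by (simp add: simple_graph_def)
lemma symE: "E x y \<Longrightarrow> E y x" using sg by (simp add: simple_graph_def)
lemma irrE: "\<not> E x x" using sg by (simp add: simple_graph_def)
lemma EV: "E x y \<Longrightarrow> x \<in> V \<and> y \<in> V" using sg by (simp add: simple_graph_def)

definition rnb :: "'a list \<Rightarrow> bool" where
  "rnb ws \<longleftrightarrow> set ws \<subseteq> V \<and> (\<forall>i. Suc i < length ws \<longrightarrow> E (ws!i) (ws!Suc i))
      \<and> (\<forall>i. Suc (Suc i) < length ws \<longrightarrow> ws!i \<noteq> ws!Suc (Suc i))"

lemma rnb_distinct:
  assumes r: "rnb xs" and l: "length xs \<le> 2*d+1"
  shows "distinct xs"
proof -
  have key: "\<forall>i j. j - i = m \<longrightarrow> i < j \<longrightarrow> j < length xs \<longrightarrow> xs!i = xs!j \<longrightarrow> False" for m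
  proof (induction m rule: less_induct)
    case (less m)
    show ?case
    proof (intro allI impI)
      fix i j assume m: "j - i = m" and ij: "i < j" and jl: "j < length xs" and eq: "xs!i = xs!j"
      define C where "C = map (\<lambda>t. xs!(i+t)) [0..<j-i]"
      have lC: "length C = j - i" by (simp add: C_def)
      have Cn: "\<And>t. t < j - i \<Longrightarrow> C!t = xs!(i+t)" by (simp add: C_def)
      show False
      proof (cases "distinct C")
        case True
        have ne1: "j - i \<noteq> 1"
        proof
          assume "j - i = 1" then have "j = Suc i" by simp
          then show False using r jl eq irrE unfolding rnb_def by metis
        qed
        have ne2: "j - i \<noteq> 2"
        proof
          assume "j - i = 2" then have "j = Suc (Suc i)" by simp
          then show False using r jl eq unfolding rnb_def by metis
        qed
        have l3: "length C \<ge> 3" using lC ne1 ne2 ij by linarith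
        have setC: "set C \<subseteq> V" using r jl unfolding rnb_def C_def by (auto simp: subset_iff)
        have adj: "\<forall>t. Suc t < length C \<longrightarrow> E (C!t) (C!Suc t)"
        proof (intro allI impI)
          fix t assume "Suc t < length C"
          then show "E (C!t) (C!Suc t)" using r jl lC Cn unfolding rnb_def
            by (metis add_Suc_right less_trans_Suc Suc_lessD less_diff_conv add.commute)
        qed
        have Cne: "C \<noteq> []" using lC ij by auto
        have hdC: "hd C = xs!i" using lC ij Cn[of 0] Cne by (simp add: hd_conv_nth)
        have lastC: "last C = xs!(j-1)" using lC ij Cn[of "j-i-1"] Cne
          by (simp add: last_conv_nth)
        have "E (xs!(j-1)) (xs!j)" using r jl ij unfolding rnb_def
          by (metis Suc_pred' gr_implies_not0 not_gr_zero)
        then have "E (last C) (hd C)" using hdC lastC eq by simp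
        then have "is_cycle V E C" using l3 setC adj True
          unfolding is_cycle_def is_path_def by auto
        then have "length C \<ge> 2*d+1" using gir unfolding girth_ge_def by blast
        then show False using lC jl l by linarith
      next
        case False
        then obtain a b where ab: "a < length C" "b < length C" "a \<noteq> b" "C!a = C!b"
          by (auto simp: distinct_conv_nth)
        show False
        proof (cases "a < b")
          case True
          have "xs!(i+a) = xs!(i+b)" using ab Cn lC by simp
          then show False using less.IH[of "b - a"] True ab lC m jl by force
        next
          case False
          then have "b < a" using ab by simp
          have "xs!(i+b) = xs!(i+a)" using ab Cn lC by simp
          then show False using less.IH[of "a - b"] \<open>b<a\<close> ab lC m jl by force
        qed
      qed
    qed
  qed
  show ?thesis unfolding distinct_conv_nth
  proof (intro allI impI)
    fix i j assume "i < length xs" "j < length xs" "i \<noteq> j"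
    then show "xs!i \<noteq> xs!j" using key by (metis linorder_neqE_nat)
  qed
qed

lemma rnb_rev: "rnb xs \<Longrightarrow> rnb (rev xs)"
  unfolding rnb_def
proof (intro conjI allI impI)
  assume a: "set xs \<subseteq> V \<and> (\<forall>i. Suc i < length xs \<longrightarrow> E (xs ! i) (xs ! Suc i)) \<and>
    (\<forall>i. Suc (Suc i) < length xs \<longrightarrow> xs ! i \<noteq> xs ! Suc (Suc i))"
  show "set (rev xs) \<subseteq> V" using a by simp
  fix i
  { assume "Suc i < length (rev xs)"
    then have "E (xs ! (length xs - Suc (Suc i))) (xs ! Suc (length xs - Suc (Suc i)))"
      using a by simp
    moreover have "Suc (length xs - Suc (Suc i)) = length xs - Suc i" using \<open>Suc i < length (rev xs)\<close> by simp
    ultimately show "E (rev xs ! i) (rev xs ! Suc i)" using \<open>Suc i < length (rev xs)\<close>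
      by (simp add: rev_nth symE) }
  { assume h: "Suc (Suc i) < length (rev xs)"
    then have "xs ! (length xs - Suc (Suc (Suc i))) \<noteq> xs ! Suc (Suc (length xs - Suc (Suc (Suc i))))"
      using a by simp
    moreover have "Suc (Suc (length xs - Suc (Suc (Suc i)))) = length xs - Suc i" using h by simp
    ultimately show "rev xs ! i \<noteq> rev xs ! Suc (Suc i)" using h
      by (simp add: rev_nth) }
qed

lemma rnb_append:
  assumes "rnb xs" "rnb ys" "xs \<noteq> []" "ys \<noteq> []" "E (last xs) (hd ys)"
    "length xs \<ge> 2 \<Longrightarrow> xs!(length xs - 2) \<noteq> hd ys"
    "length ys \<ge> 2 \<Longrightarrow> last xs \<noteq> ys!1"
  shows "rnb (xs @ ys)"
  unfolding rnb_def
proof (intro conjI allI impI)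
  show "set (xs @ ys) \<subseteq> V" using assms(1,2) by (simp add: rnb_def)
  fix i
  { assume h: "Suc i < length (xs @ ys)"
    consider "Suc i < length xs" | "Suc i = length xs" | "length xs \<le> i" by linarith
    then show "E ((xs @ ys) ! i) ((xs @ ys) ! Suc i)"
    proof cases
      case 1 then show ?thesis using assms(1) by (simp add: nth_append rnb_def)
    next
      case 2 then have "i = length xs - 1" by simp
      then show ?thesis using assms(3,4,5) 2
        by (simp add: nth_append last_conv_nth hd_conv_nth)
    next
      case 3
      then have "Suc (i - length xs) < length ys" using h by simp
      then show ?thesis using assms(2) 3 by (simp add: nth_append rnb_def Suc_diff_le)
    qed }
  { assume h: "Suc (Suc i) < length (xs @ ys)"
    consider "Suc (Suc i) < length xs" | "Suc (Suc i) = length xs" | "Suc i = length xs" | "length xs \<le> i" by linarith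
    then show "(xs @ ys) ! i \<noteq> (xs @ ys) ! Suc (Suc i)"
    proof cases
      case 1 then show ?thesis using assms(1) by (simp add: nth_append rnb_def)
    next
      case 2 then have "i = length xs - 2" by simp
      then show ?thesis using assms(4,6) 2
        by (simp add: nth_append hd_conv_nth)
    next
      case 3
      then have "length ys \<ge> 2" using h by simp
      moreover have "i = length xs - 1" using 3 by simp
      ultimately show ?thesis using assms(3,7) 3 
        by (simp add: nth_append last_conv_nth numeral_2_eq_2)
    next
      case 4
      then have "Suc (Suc (i - length xs)) < length ys" using h by simp
      then show ?thesis using assms(2) 4 by (simp add: nth_append rnb_def Suc_diff_le)
    qed }
qed

lemma rnb_tl: "rnb (x # R) \<Longrightarrow> rnb R"
  unfolding rnb_def by (auto simp del: nth_Cons_Suc)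

lemma rnb_unique:
  "rnb P1 \<Longrightarrow> rnb P2 \<Longrightarrow> P1 \<noteq> [] \<Longrightarrow> P2 \<noteq> [] \<Longrightarrow> hd P1 = hd P2 \<Longrightarrow> last P1 = last P2
   \<Longrightarrow> length P1 + length P2 \<le> 2*d+2 \<Longrightarrow> P1 = P2"
proof (induction P1 arbitrary: P2)
  case Nil then show ?case by simp
next
  case (Cons x R1)
  obtain R2 where P2: "P2 = x # R2" using Cons.prems by (cases P2) auto
  show ?case
  proof (cases "R1 = []")
    case True
    show ?thesis
    proof (rule ccontr)
      assume "x # R1 \<noteq> P2"
      then have "R2 \<noteq> []" using True P2 by simp
      then have "last R2 = x" using Cons.prems True P2 by simp
      moreover have "distinct P2" using rnb_distinct Cons.prems True by simp
      ultimately show False using P2 \<open>R2 \<noteq> []\<close> last_in_set by fastforce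
    qed
  next
    case R1: False
    show ?thesis
    proof (cases "R2 = []")
      case True
      have "last R1 = x" using Cons.prems True P2 R1 by simp
      moreover have "distinct (x # R1)" using rnb_distinct[OF Cons.prems(1)] Cons.prems True P2 by simp
      ultimately show ?thesis using R1 last_in_set by fastforce
    next
      case R2: False
      show ?thesis
      proof (cases "hd R1 = hd R2")
        case True
        have "R1 = R2"
          using Cons.IH[of R2] Cons.prems rnb_tl P2 R1 R2 True by simp
        then show ?thesis using P2 by simp
      next
        case False
        define W where "W = rev (x # R2) @ R1"
        have a: "rnb (rev (x # R2))" using rnb_rev[of "x#R2"] Cons.prems P2 by blast
        have b: "rnb R1" using rnb_tl Cons.prems by blast
        have c: "E x (hd R1)" using Cons.prems(1) R1 unfolding rnb_def
          by (metis Suc_mono hd_conv_nth length_Cons length_greater_0_conv nth_Cons_0 nth_Cons_Suc)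
        have e: "length R1 \<ge> 2 \<Longrightarrow> x \<noteq> R1!1" using Cons.prems(1) unfolding rnb_def
          by (metis One_nat_def Suc_1 Suc_le_lessD Suc_less_eq length_Cons nth_Cons_0 nth_Cons_Suc)
        have f: "rev (x # R2) ! (length (rev (x # R2)) - 2) = hd R2" using R2
          by (simp add: rev_nth hd_conv_nth nth_append)
        have "rnb W" unfolding W_def
          by (rule rnb_append[OF a b]) (use R1 c e f False in auto)
        moreover have "length W \<le> 2*d+1" using Cons.prems P2 by (simp add: W_def)
        ultimately have "distinct W" by (rule rnb_distinct)
        moreover have "hd W = last W" using Cons.prems P2 R1 R2
          by (simp add: W_def hd_rev)
        moreover have "length W \<ge> 2" using R1 by (simp add: W_def Suc_leI)
        ultimately have False
        proof (cases W)
          case (Cons a W')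
          assume "distinct W" "hd W = last W" "length W \<ge> 2"
          then show False using Cons last_in_set[of W'] by (cases W') auto
        qed simp
        then show ?thesis ..
      qed
    qed
  qed
qed

definition nbr :: "'a \<Rightarrow> 'a set" where "nbr x = {y\<in>V. E x y}"
definition nxt :: "'a list \<Rightarrow> 'a set" where "nxt ws = {y\<in>V. E (hd ws) y \<and> y \<noteq> hd (tl ws)}"
definition good :: "'a list \<Rightarrow> bool" where "good ws \<longleftrightarrow> rnb ws \<and> length ws \<ge> 2"

lemma card_nbr: "x \<in> V \<Longrightarrow> card (nbr x) = 3"
  using cub unfolding cubic_def nbr_def by blast

lemma fin_nbr: "finite (nbr x)" using finV unfolding nbr_def by simp
lemma fin_nxt: "finite (nxt ws)" using finV unfolding nxt_def by simp

lemma nxt_card: assumes "good ws" shows "card (nxt ws) = 2"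
proof -
  obtain a b r where ws: "ws = a # b # r" using assms unfolding good_def
    by (metis One_nat_def Suc_1 Suc_le_length_iff)
  have ab: "E a b" "a \<in> V" "b \<in> V" using assms ws unfolding good_def rnb_def by auto
  have "nxt ws = nbr a - {b}" unfolding nxt_def nbr_def ws by auto
  moreover have "b \<in> nbr a" using ab unfolding nbr_def by simp
  ultimately show ?thesis using card_nbr[OF ab(2)] fin_nbr by (simp add: card_Diff_singleton)
qed

lemma good_Cons: assumes "good ws" "y \<in> nxt ws" shows "good (y # ws)"
proof -
  obtain a b r where ws: "ws = a # b # r" using assms unfolding good_def
    by (metis One_nat_def Suc_1 Suc_le_length_iff)
  have y: "y \<in> V" "E a y" "y \<noteq> b" using assms(2) unfolding nxt_def ws by auto
  have r: "rnb (a # b # r)" using assms(1) ws good_def by simp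
  have "rnb (y # a # b # r)" unfolding rnb_def
  proof (intro conjI allI impI)
    show "set (y # a # b # r) \<subseteq> V" using r y unfolding rnb_def by simp
    fix i
    show "Suc i < length (y # a # b # r) \<Longrightarrow> E ((y # a # b # r) ! i) ((y # a # b # r) ! Suc i)"
      using r y symE unfolding rnb_def by (cases i) auto
    show "Suc (Suc i) < length (y # a # b # r) \<Longrightarrow> (y # a # b # r) ! i \<noteq> (y # a # b # r) ! Suc (Suc i)"
      using r y unfolding rnb_def by (cases i) auto
  qed
  then show ?thesis using ws good_def by simp
qed

primrec h :: "nat \<Rightarrow> 'a set \<Rightarrow> 'a list \<Rightarrow> real" where
  "h 0 S ws = (if hd ws \<in> S then 1 else 0)"
| "h (Suc k) S ws = (if hd ws \<in> S then 1 else (\<Sum>y\<in>nxt ws. h k S (y # ws)) / 2)"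

primrec Fw :: "nat \<Rightarrow> 'a set \<Rightarrow> 'a list \<Rightarrow> 'a list set" where
  "Fw 0 S ws = (if hd ws \<in> S then {ws} else {})"
| "Fw (Suc k) S ws = (if hd ws \<in> S then {ws} else (\<Union>y\<in>nxt ws. Fw k S (y # ws)))"

lemma h_bounds: "good ws \<Longrightarrow> 0 \<le> h k S ws \<and> h k S ws \<le> 1"
proof (induction k arbitrary: ws)
  case 0 then show ?case by simp
next
  case (Suc k)
  have "(\<Sum>y\<in>nxt ws. h k S (y # ws)) \<le> of_nat (card (nxt ws)) * 1"
    by (rule sum_bounded_above) (use Suc good_Cons in blast)
  moreover have "0 \<le> (\<Sum>y\<in>nxt ws. h k S (y # ws))"
    by (rule sum_nonneg) (use Suc good_Cons in blast)
  ultimately show ?case using nxt_card[OF Suc.prems] by simp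
qed

lemma h_mono: "good ws \<Longrightarrow> A \<subseteq> S \<Longrightarrow> h k A ws \<le> h k S ws"
proof (induction k arbitrary: ws)
  case 0 then show ?case by auto
next
  case (Suc k)
  show ?case
  proof (cases "hd ws \<in> S")
    case True then show ?thesis using h_bounds[OF Suc.prems(1), of "Suc k" A] by simp
  next
    case False
    then have "hd ws \<notin> A" using Suc.prems by auto
    moreover have "(\<Sum>y\<in>nxt ws. h k A (y # ws)) \<le> (\<Sum>y\<in>nxt ws. h k S (y # ws))"
      by (rule sum_mono) (use Suc good_Cons in blast)
    ultimately show ?thesis using False by simp
  qed
qed

lemma Fw_fin: "finite (Fw k S ws)"
  by (induction k arbitrary: ws) (auto simp: fin_nxt)

lemma Fw_shape: "P \<in> Fw k S ws \<Longrightarrow> \<exists>zs. P = zs @ ws \<and> length zs \<le> k"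
proof (induction k arbitrary: ws)
  case 0 then show ?case by (auto split: if_splits)
next
  case (Suc k)
  show ?case
  proof (cases "hd ws \<in> S")
    case True then show ?thesis using Suc.prems by auto
  next
    case False
    then obtain y where "P \<in> Fw k S (y # ws)" using Suc.prems by auto
    then obtain zs where "P = zs @ y # ws" "length zs \<le> k" using Suc.IH by blast
    then show ?thesis by (intro exI[of _ "zs @ [y]"]) auto
  qed
qed

lemma Fw_prop: "good ws \<Longrightarrow> P \<in> Fw k S ws \<Longrightarrow> \<exists>zs. P = zs @ ws \<and> length zs \<le> k \<and> hd P \<in> S \<and> rnb P
   \<and> (zs \<noteq> [] \<longrightarrow> hd ws \<notin> S \<and> set (tl zs) \<inter> S = {})"
proof (induction k arbitrary: ws)
  case 0 then show ?case by (auto split: if_splits simp: good_def)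
next
  case (Suc k)
  show ?case
  proof (cases "hd ws \<in> S")
    case True then show ?thesis using Suc.prems by (auto simp: good_def)
  next
    case False
    then obtain y where y: "y \<in> nxt ws" "P \<in> Fw k S (y # ws)" using Suc.prems by auto
    then obtain zs where zs: "P = zs @ y # ws" "length zs \<le> k" "hd P \<in> S" "rnb P"
      "zs \<noteq> [] \<longrightarrow> y \<notin> S \<and> set (tl zs) \<inter> S = {}"
      using Suc.IH[of "y # ws"] good_Cons[OF Suc.prems(1)] by auto
    have "set (tl (zs @ [y])) \<inter> S = {}"
      using zs(5) by (cases zs) auto
    then show ?thesis using zs False by (intro exI[of _ "zs @ [y]"]) auto
  qed
qed

lemma h_Fw: "h k S ws = (\<Sum>P\<in>Fw k S ws. (1/2::real)^(length P - length ws))"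
proof (induction k arbitrary: ws)
  case 0 then show ?case by simp
next
  case (Suc k)
  show ?case
  proof (cases "hd ws \<in> S")
    case True then show ?thesis by simp
  next
    case False
    have "h (Suc k) S ws = (\<Sum>y\<in>nxt ws. (\<Sum>P\<in>Fw k S (y # ws). (1/2::real)^(length P - length ws)))"
    proof -
      have "h (Suc k) S ws = (\<Sum>y\<in>nxt ws. (\<Sum>P\<in>Fw k S (y # ws). (1/2::real)^(length P - Suc (length ws)))) / 2"
        using False Suc.IH by simp
      also have "\<dots> = (\<Sum>y\<in>nxt ws. (\<Sum>P\<in>Fw k S (y # ws). (1/2::real)^(length P - Suc (length ws)) / 2))"
        by (simp add: sum_divide_distrib)
      also have "\<dots> = (\<Sum>y\<in>nxt ws. (\<Sum>P\<in>Fw k S (y # ws). (1/2::real)^(length P - length ws)))"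
      proof (intro sum.cong refl)
        fix y P assume "P \<in> Fw k S (y # ws)"
        then obtain zs where "P = zs @ y # ws" using Fw_shape by blast
        then have "length P - length ws = Suc (length P - Suc (length ws))" by simp
        then show "(1/2::real)^(length P - Suc (length ws)) / 2 = (1/2)^(length P - length ws)"
          by simp
      qed
      finally show ?thesis .
    qed
    also have "\<dots> = (\<Sum>P\<in>(\<Union>y\<in>nxt ws. Fw k S (y # ws)). (1/2::real)^(length P - length ws))"
    proof (rule sum.UNION_disjoint[symmetric])
      show "finite (nxt ws)" by (rule fin_nxt)
      show "\<forall>i\<in>nxt ws. finite (Fw k S (i # ws))" using Fw_fin by blast
      show "\<forall>i\<in>nxt ws. \<forall>j\<in>nxt ws. i \<noteq> j \<longrightarrow> Fw k S (i # ws) \<inter> Fw k S (j # ws) = {}"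
      proof (intro ballI impI)
        fix i j :: 'a assume "i \<noteq> j"
        show "Fw k S (i # ws) \<inter> Fw k S (j # ws) = {}"
        proof (rule ccontr)
          assume "Fw k S (i # ws) \<inter> Fw k S (j # ws) \<noteq> {}"
          then obtain P where "P \<in> Fw k S (i # ws)" "P \<in> Fw k S (j # ws)" by blast
          then obtain z1 z2 where "P = z1 @ i # ws" "P = z2 @ j # ws" using Fw_shape by meson
          then have "(z1 @ [i]) @ ws = (z2 @ [j]) @ ws" by simp
          then have "z1 @ [i] = z2 @ [j]" by (simp only: append_same_eq)
          then show False using \<open>i \<noteq> j\<close> by simp
        qed
      qed
    qed
    finally show ?thesis using False by simp
  qed
qed

definition H :: "'a set \<Rightarrow> 'a \<Rightarrow> real" where
  "H S u = (\<Sum>w\<in>nbr u. h (d - 1) S [w, u])"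

lemma good_start: "u \<in> V \<Longrightarrow> w \<in> nbr u \<Longrightarrow> good [w, u]"
  unfolding good_def rnb_def nbr_def using symE by (auto simp: less_Suc_eq nth_Cons')

lemma term_bound:
  assumes uV: "u \<in> V" and uS: "u \<notin> S" and SV: "S \<subseteq> V" and w: "w \<in> nbr u"
    and P: "P \<in> Fw (d - 1) S [w, u]"
  shows "(1/2::real)^(length P - 2) \<le> (case dist_S V E S u (hd P) of
       enat k \<Rightarrow> (1/2::real) powi (int k - 1) | \<infinity> \<Rightarrow> 0)"
proof -
  obtain zs where zs: "P = zs @ [w, u]" "length zs \<le> d - 1" "hd P \<in> S" "rnb P"
    "zs \<noteq> [] \<longrightarrow> w \<notin> S \<and> set (tl zs) \<inter> S = {}"
    using Fw_prop[OF good_start[OF uV w] P] by auto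
  have lP: "length P \<le> d + 1" "length P \<ge> 2" using zs d1 by auto
  have dP: "distinct (rev P)" using rnb_distinct[OF zs(4)] lP by simp
  have rr: "rnb (rev P)" using rnb_rev[OF zs(4)] .
  have ip: "is_path V E (rev P)" using rr dP zs(1) unfolding is_path_def rnb_def by auto
  have hdP: "hd P \<noteq> u" using zs(3) uS by auto
  have c1: "card ({hd (rev P), last (rev P)} \<inter> S) = 1"
  proof -
    have "{hd (rev P), last (rev P)} \<inter> S = {hd P}" using zs(1,3) uS by (auto simp: hd_rev last_rev)
    then show ?thesis by simp
  qed
  have int: "set (butlast (tl (rev P))) \<inter> S = {}"
  proof (cases zs)
    case Nil then show ?thesis using zs(1) by simp
  next
    case (Cons z zs')
    then show ?thesis using zs(1,5) by (auto simp: butlast_append)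
  qed
  have "S_path V E S u (hd P) (rev P)"
    unfolding S_path_def using ip c1 int zs(1) by (auto simp: hd_rev last_rev)
  then have "dist_S V E S u (hd P) \<le> enat (length (rev P) - 1)"
    unfolding dist_S_def by (rule INF_lower[OF CollectI])
  then obtain m where m: "dist_S V E S u (hd P) = enat m" "m \<le> length P - 1"
    using enat_ile by fastforce
  have "(1/2::real)^(length P - 2) = (1/2::real) powi (int (length P - 1) - 1)"
  proof -
    have "int (length P - 1) - 1 = int (length P - 2)" using lP by simp
    then show ?thesis by (metis power_int_of_nat)
  qed
  also have "\<dots> \<le> (1/2::real) powi (int m - 1)"
    by (rule power_int_decreasing) (use m in auto)
  finally show ?thesis using m by simp
qed

lemma weight_ge_H:
  assumes uV: "u \<in> V" and uS: "u \<notin> S" and SV: "S \<subseteq> V"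
  shows "H S u \<le> weight_S V E S u"
proof -
  define F where "F = (\<Union>w\<in>nbr u. Fw (d - 1) S [w, u])"
  define t where "t x = (case dist_S V E S u x of enat k \<Rightarrow> (1/2::real) powi (int k - 1) | \<infinity> \<Rightarrow> 0)" for x
  have HF: "H S u = (\<Sum>P\<in>F. (1/2::real)^(length P - 2))"
  proof -
    have "H S u = (\<Sum>w\<in>nbr u. (\<Sum>P\<in>Fw (d - 1) S [w, u]. (1/2::real)^(length P - 2)))"
      unfolding H_def by (simp add: h_Fw numeral_2_eq_2)
    also have "\<dots> = (\<Sum>P\<in>F. (1/2::real)^(length P - 2))"
      unfolding F_def
    proof (rule sum.UNION_disjoint[symmetric])
      show "finite (nbr u)" by (rule fin_nbr)
      show "\<forall>i\<in>nbr u. finite (Fw (d - 1) S [i, u])" using Fw_fin by blast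
      show "\<forall>i\<in>nbr u. \<forall>j\<in>nbr u. i \<noteq> j \<longrightarrow> Fw (d - 1) S [i, u] \<inter> Fw (d - 1) S [j, u] = {}"
      proof (intro ballI impI)
        fix i j :: 'a assume "i \<noteq> j"
        show "Fw (d - 1) S [i, u] \<inter> Fw (d - 1) S [j, u] = {}"
        proof (rule ccontr)
          assume "Fw (d - 1) S [i, u] \<inter> Fw (d - 1) S [j, u] \<noteq> {}"
          then obtain P where "P \<in> Fw (d - 1) S [i, u]" "P \<in> Fw (d - 1) S [j, u]" by blast
          then obtain z1 z2 where "P = z1 @ [i, u]" "P = z2 @ [j, u]" using Fw_shape by meson
          then have "(z1 @ [i]) @ [u] = (z2 @ [j]) @ [u]" by simp
          then have "z1 @ [i] = z2 @ [j]" by (simp only: append_same_eq)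
          then show False using \<open>i \<noteq> j\<close> by simp
        qed
      qed
    qed
    finally show ?thesis .
  qed
  have Fprop: "\<And>P. P \<in> F \<Longrightarrow> rnb P \<and> P \<noteq> [] \<and> last P = u \<and> length P \<le> d + 1 \<and> hd P \<in> S"
  proof -
    fix P assume "P \<in> F"
    then obtain w where w: "w \<in> nbr u" "P \<in> Fw (d - 1) S [w, u]" unfolding F_def by blast
    then obtain zs where zs: "P = zs @ [w, u]" "length zs \<le> d - 1" "hd P \<in> S" "rnb P"
      using Fw_prop[OF good_start[OF uV w(1)] w(2)] by auto
    then show "rnb P \<and> P \<noteq> [] \<and> last P = u \<and> length P \<le> d + 1 \<and> hd P \<in> S" using d1 by auto
  qed
  have inj: "inj_on hd F"
  proof (rule inj_onI)
    fix P1 P2 assume "P1 \<in> F" "P2 \<in> F" "hd P1 = hd P2"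
    then show "P1 = P2" using Fprop[of P1] Fprop[of P2] rnb_unique[of P1 P2] by auto
  qed
  have finF: "finite F" unfolding F_def using Fw_fin fin_nbr by blast
  have "(\<Sum>P\<in>F. (1/2::real)^(length P - 2)) \<le> (\<Sum>P\<in>F. t (hd P))"
  proof (rule sum_mono)
    fix P assume "P \<in> F"
    then obtain w where w: "w \<in> nbr u" "P \<in> Fw (d - 1) S [w, u]" unfolding F_def by blast
    show "(1/2::real)^(length P - 2) \<le> t (hd P)"
      unfolding t_def by (rule term_bound[OF uV uS SV w])
  qed
  also have "\<dots> = (\<Sum>x\<in>hd ` F. t x)" using sum.reindex[OF inj, of t] by simp
  also have "\<dots> \<le> (\<Sum>x\<in>S. t x)"
  proof (rule sum_mono2)
    show "finite S" using SV finV finite_subset by blast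
    show "hd ` F \<subseteq> S" using Fprop by auto
    show "\<And>b. b \<in> S - hd ` F \<Longrightarrow> 0 \<le> t b" unfolding t_def
      by (auto split: enat.splits)
  qed
  finally show ?thesis unfolding HF weight_S_def t_def .
qed

definition mu :: "real \<Rightarrow> 'a set \<Rightarrow> real" where
  "mu p A = (\<Prod>x\<in>A. p) * (\<Prod>x\<in>V - A. 1 - p)"

lemma mu_nonneg: "0 \<le> p \<Longrightarrow> p \<le> 1 \<Longrightarrow> 0 \<le> mu p A"
  unfolding mu_def by (intro mult_nonneg_nonneg prod_nonneg) auto

lemma sum_avoid:
  assumes T: "T \<subseteq> V"
  shows "(\<Sum>A\<in>Pow V. mu p A * (if T \<inter> A = {} then 1 else 0)) = (1 - p) ^ card T"
proof -
  have "(\<Prod>x\<in>V. (if x \<in> T then 0 else p) + (1 - p)) =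
      (\<Sum>A\<in>Pow V. (\<Prod>x\<in>A. if x \<in> T then 0 else p) * (\<Prod>x\<in>V - A. 1 - p))"
    by (rule prod_add[OF finV])
  moreover have "(\<Prod>x\<in>V. (if x \<in> T then 0 else p) + (1 - p)) = (1 - p) ^ card T"
  proof -
    have "(\<Prod>x\<in>V. (if x \<in> T then 0 else p) + (1 - p)) = (\<Prod>x\<in>V. if x \<in> T then 1 - p else 1)"
      by (rule prod.cong) auto
    also have "\<dots> = (\<Prod>x\<in>V \<inter> {x. x \<in> T}. 1 - p) * (\<Prod>x\<in>V \<inter> - {x. x \<in> T}. 1)"
      by (rule prod.If_cases[OF finV])
    also have "V \<inter> {x. x \<in> T} = T" using T by auto
    finally show ?thesis by simp
  qed
  moreover have "(\<Prod>x\<in>A. if x \<in> T then 0 else p) * (\<Prod>x\<in>V - A. 1 - p) =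
       mu p A * (if T \<inter> A = {} then 1 else 0)" if "A \<in> Pow V" for A
  proof -
    have fA: "finite A" using that finV finite_subset by auto
    show ?thesis
    proof (cases "T \<inter> A = {}")
      case True
      then have "(\<Prod>x\<in>A. if x \<in> T then 0 else p) = (\<Prod>x\<in>A. p)" by (intro prod.cong) auto
      then show ?thesis using True by (simp add: mu_def)
    next
      case False
      then obtain x where "x \<in> T" "x \<in> A" by auto
      then have "(\<Prod>x\<in>A. if x \<in> T then 0 else p) = 0" using fA
        by (intro prod_zero) auto
      then show ?thesis using False by simp
    qed
  qed
  ultimately show ?thesis by (metis (no_types, lifting) sum.cong)
qed

lemma sum_mu: "(\<Sum>A\<in>Pow V. mu p A) = 1"
  using sum_avoid[of "{}" p] by simp

lemma sum_mem:
  assumes u: "u \<in> V"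
  shows "(\<Sum>A\<in>Pow V. mu p A * (if u \<in> A then 1 else 0)) = p"
proof -
  have "(\<Prod>x\<in>V. p + (if x = u then 0 else 1 - p)) =
      (\<Sum>A\<in>Pow V. (\<Prod>x\<in>A. p) * (\<Prod>x\<in>V - A. if x = u then 0 else 1 - p))"
    by (rule prod_add[OF finV])
  moreover have "(\<Prod>x\<in>V. p + (if x = u then 0 else 1 - p)) = p"
  proof -
    have "(\<Prod>x\<in>V. p + (if x = u then 0 else 1 - p)) = (\<Prod>x\<in>V. if x = u then p else 1)"
      by (rule prod.cong) auto
    also have "\<dots> = p" using u finV by (simp add: prod.delta)
    finally show ?thesis .
  qed
  moreover have "(\<Prod>x\<in>A. p) * (\<Prod>x\<in>V - A. if x = u then 0 else 1 - p) =
       mu p A * (if u \<in> A then 1 else 0)" if "A \<in> Pow V" for A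
  proof (cases "u \<in> A")
    case True
    then have "(\<Prod>x\<in>V - A. if x = u then 0 else 1 - p) = (\<Prod>x\<in>V - A. 1 - p)" by (intro prod.cong) auto
    then show ?thesis using True by (simp add: mu_def)
  next
    case False
    then have "(\<Prod>x\<in>V - A. if x = u then 0 else 1 - p) = 0" using u finV
      by (intro prod_zero) auto
    then show ?thesis using False by simp
  qed
  ultimately show ?thesis by (metis (no_types, lifting) sum.cong)
qed

lemma sum_card: "(\<Sum>A\<in>Pow V. mu p A * real (card A)) = p * real (card V)"
proof -
  have "(\<Sum>A\<in>Pow V. mu p A * real (card A)) = (\<Sum>A\<in>Pow V. \<Sum>u\<in>V. mu p A * (if u \<in> A then 1 else 0))"
  proof (rule sum.cong[OF refl])
    fix A assume "A \<in> Pow V"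
    then have "real (card A) = (\<Sum>u\<in>V. (if u \<in> A then 1 else 0))"
      using finV by (simp add: sum.If_cases Int_absorb1)
    then show "mu p A * real (card A) = (\<Sum>u\<in>V. mu p A * (if u \<in> A then 1 else 0))"
      by (simp add: sum_distrib_left)
  qed
  also have "\<dots> = (\<Sum>u\<in>V. \<Sum>A\<in>Pow V. mu p A * (if u \<in> A then 1 else 0))" by (rule sum.swap)
  also have "\<dots> = (\<Sum>u\<in>V. p)" using sum_mem by simp
  finally show ?thesis by simp
qed

lemma E2:
  assumes p0: "0 \<le> p" and p1: "p \<le> 1"
  shows "good ws \<Longrightarrow> length ws + k \<le> d + 1 \<Longrightarrow>
    (\<Sum>A\<in>Pow V. mu p A * (if set (tl ws) \<inter> A = {} then 1 - h k A ws else 0)) \<le> (1 - p) ^ (length ws + k)"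
proof (induction k arbitrary: ws)
  case 0
  have ne: "ws \<noteq> []" using 0 by (auto simp: good_def)
  have sv: "set ws \<subseteq> V" using 0 by (auto simp: good_def rnb_def)
  have dist: "distinct ws" using rnb_distinct 0 by (auto simp: good_def)
  have "(\<Sum>A\<in>Pow V. mu p A * (if set (tl ws) \<inter> A = {} then 1 - h 0 A ws else 0))
      = (\<Sum>A\<in>Pow V. mu p A * (if set ws \<inter> A = {} then 1 else 0))"
  proof (rule sum.cong[OF refl])
    fix A
    have "set ws = insert (hd ws) (set (tl ws))" using ne by (cases ws) auto
    then show "mu p A * (if set (tl ws) \<inter> A = {} then 1 - h 0 A ws else 0) =
        mu p A * (if set ws \<inter> A = {} then 1 else 0)" by auto
  qed
  also have "\<dots> = (1 - p) ^ card (set ws)" by (rule sum_avoid[OF sv])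
  also have "card (set ws) = length ws" using dist by (simp add: distinct_card)
  finally show ?case by simp
next
  case (Suc k)
  have ne: "ws \<noteq> []" using Suc by (auto simp: good_def)
  have c2: "card (nxt ws) = 2" using nxt_card Suc.prems by blast
  have pw: "mu p A * (if set (tl ws) \<inter> A = {} then 1 - h (Suc k) A ws else 0) =
     (\<Sum>y\<in>nxt ws. mu p A * (if set (tl (y # ws)) \<inter> A = {} then 1 - h k A (y # ws) else 0)) / 2" for A
  proof -
    have sws: "set ws = insert (hd ws) (set (tl ws))" using ne by (cases ws) auto
    show ?thesis
    proof (cases "set ws \<inter> A = {}")
      case True
      then have "hd ws \<notin> A" "set (tl ws) \<inter> A = {}" using sws by auto
      moreover have "(\<Sum>y\<in>nxt ws. mu p A * (1 - h k A (y # ws))) = mu p A * (2 - (\<Sum>y\<in>nxt ws. h k A (y # ws)))"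
        using c2 by (simp add: sum_distrib_left[symmetric] sum_subtractf)
      ultimately show ?thesis using True by (simp add: algebra_simps)
    next
      case False
      then show ?thesis using sws by auto
    qed
  qed
  have "(\<Sum>A\<in>Pow V. mu p A * (if set (tl ws) \<inter> A = {} then 1 - h (Suc k) A ws else 0))
     = (\<Sum>y\<in>nxt ws. \<Sum>A\<in>Pow V. mu p A * (if set (tl (y # ws)) \<inter> A = {} then 1 - h k A (y # ws) else 0)) / 2"
    by (simp add: pw sum_divide_distrib[symmetric] sum.swap[of _ "nxt ws"])
  also have "\<dots> \<le> (\<Sum>y\<in>nxt ws. (1 - p) ^ (length (y # ws) + k)) / 2"
  proof (intro divide_right_mono sum_mono)
    fix y assume "y \<in> nxt ws"
    then show "(\<Sum>A\<in>Pow V. mu p A * (if set (tl (y # ws)) \<inter> A = {} then 1 - h k A (y # ws) else 0))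
        \<le> (1 - p) ^ (length (y # ws) + k)"
      using Suc.IH[of "y # ws"] good_Cons Suc.prems by simp
  qed simp
  also have "\<dots> = (1 - p) ^ (length ws + Suc k)" using c2 by simp
  finally show ?case .
qed

lemma E_vertex:
  assumes p0: "0 \<le> p" and p1: "p \<le> 1" and u: "u \<in> V" and w: "w \<in> nbr u"
  shows "(\<Sum>A\<in>Pow V. mu p A * (if u \<notin> A then 1 - h (d - 1) A [w, u] else 0)) \<le> (1 - p) ^ d"
proof -
  have "(\<Sum>A\<in>Pow V. mu p A * (if u \<notin> A then 1 - h (d - 1) A [w, u] else 0))
      = (\<Sum>A\<in>Pow V. mu p A * (if set (tl [w, u]) \<inter> A = {} then 1 - h (d - 1) A [w, u] else 0))"
    by simp
  also have "\<dots> \<le> (1 - p) ^ (length [w, u] + (d - 1))"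
    by (rule E2[OF p0 p1 good_start[OF u w]]) (use d1 in simp)
  also have "\<dots> \<le> (1 - p) ^ d"
    by (rule power_decreasing) (use p0 p1 d1 in auto)
  finally show ?thesis .
qed

definition g :: "'a set \<Rightarrow> 'a \<Rightarrow> real" where
  "g A u = (if u \<notin> A then (\<Sum>w\<in>nbr u. 1 - h (d - 1) A [w, u]) / 2 else 0)"

lemma expect_f:
  assumes p0: "0 \<le> p" and p1: "p \<le> 1"
  shows "(\<Sum>A\<in>Pow V. mu p A * (real (card A) + (\<Sum>u\<in>V. g A u)))
     \<le> p * real (card V) + 3 / 2 * real (card V) * (1 - p) ^ d"
proof -
  have "(\<Sum>A\<in>Pow V. mu p A * (real (card A) + (\<Sum>u\<in>V. g A u)))
      = (\<Sum>A\<in>Pow V. mu p A * real (card A)) + (\<Sum>A\<in>Pow V. \<Sum>u\<in>V. mu p A * g A u)"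
    by (simp add: distrib_left sum.distrib sum_distrib_left)
  also have "(\<Sum>A\<in>Pow V. \<Sum>u\<in>V. mu p A * g A u)
      = (\<Sum>u\<in>V. \<Sum>w\<in>nbr u. (\<Sum>A\<in>Pow V. mu p A * (if u \<notin> A then 1 - h (d - 1) A [w, u] else 0)) / 2)"
  proof -
    have "(\<Sum>A\<in>Pow V. \<Sum>u\<in>V. mu p A * g A u)
       = (\<Sum>A\<in>Pow V. \<Sum>u\<in>V. \<Sum>w\<in>nbr u. mu p A * (if u \<notin> A then 1 - h (d - 1) A [w, u] else 0) / 2)"
      unfolding g_def by (intro sum.cong refl) (auto simp: sum_distrib_left sum_divide_distrib)
    also have "\<dots> = (\<Sum>u\<in>V. \<Sum>A\<in>Pow V. \<Sum>w\<in>nbr u. mu p A * (if u \<notin> A then 1 - h (d - 1) A [w, u] else 0) / 2)"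
      by (rule sum.swap)
    also have "\<dots> = (\<Sum>u\<in>V. \<Sum>w\<in>nbr u. \<Sum>A\<in>Pow V. mu p A * (if u \<notin> A then 1 - h (d - 1) A [w, u] else 0) / 2)"
      by (intro sum.cong refl sum.swap)
    finally show ?thesis by (simp add: sum_divide_distrib)
  qed
  also have "\<dots> \<le> (\<Sum>u\<in>V. \<Sum>w\<in>nbr u. (1 - p) ^ d / 2)"
    by (intro sum_mono divide_right_mono E_vertex[OF p0 p1]) auto
  also have "\<dots> = (\<Sum>u\<in>V. 3 * ((1 - p) ^ d / 2))" using card_nbr by simp
  finally show ?thesis using sum_card[of p] by simp
qed

lemma exists_A:
  assumes p0: "0 \<le> p" and p1: "p \<le> 1"
  shows "\<exists>A\<in>Pow V. real (card A) + (\<Sum>u\<in>V. g A u) \<le> p * real (card V) + 3 / 2 * real (card V) * (1 - p) ^ d"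
proof (rule ccontr)
  define c where "c = p * real (card V) + 3 / 2 * real (card V) * (1 - p) ^ d"
  define f where "f A = real (card A) + (\<Sum>u\<in>V. g A u)" for A
  assume na: "\<not> (\<exists>A\<in>Pow V. real (card A) + (\<Sum>u\<in>V. g A u) \<le> p * real (card V) + 3 / 2 * real (card V) * (1 - p) ^ d)"
  have gt: "f A > c" if "A \<in> Pow V" for A
  proof -
    have "\<not> (f A \<le> c)" using na that unfolding f_def c_def by blast
    then show ?thesis by simp
  qed
  have ex: "(\<Sum>A\<in>Pow V. mu p A * f A) \<le> c" using expect_f[OF p0 p1] unfolding f_def c_def .
  have "(\<Sum>A\<in>Pow V. mu p A * (f A - c)) = (\<Sum>A\<in>Pow V. mu p A * f A - mu p A * c)"
    by (simp add: right_diff_distrib)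
  also have "\<dots> = (\<Sum>A\<in>Pow V. mu p A * f A) - (\<Sum>A\<in>Pow V. mu p A) * c"
    by (simp add: sum_subtractf sum_distrib_right)
  also have "\<dots> \<le> 0" using ex sum_mu[of p] by simp
  finally have le: "(\<Sum>A\<in>Pow V. mu p A * (f A - c)) \<le> 0" .
  have nn: "\<forall>A\<in>Pow V. 0 \<le> mu p A * (f A - c)"
  proof
    fix A assume "A \<in> Pow V"
    then have "0 \<le> f A - c" using gt[of A] by simp
    then show "0 \<le> mu p A * (f A - c)" using mu_nonneg[OF p0 p1] by simp
  qed
  have fP: "finite (Pow V)" using finV by simp
  have "0 \<le> (\<Sum>A\<in>Pow V. mu p A * (f A - c))"
    by (rule sum_nonneg) (use nn in blast)
  then have "(\<Sum>A\<in>Pow V. mu p A * (f A - c)) = 0"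
    using le by linarith
  then have z: "\<forall>A\<in>Pow V. mu p A * (f A - c) = 0"
    using sum_nonneg_eq_0_iff[OF fP, of "\<lambda>A. mu p A * (f A - c)"] nn by simp
  have "\<forall>A\<in>Pow V. mu p A = 0"
  proof
    fix A assume A: "A \<in> Pow V"
    then have "f A - c \<noteq> 0" using gt[OF A] by simp
    moreover have "mu p A * (f A - c) = 0" using z A by blast
    ultimately show "mu p A = 0" by simp
  qed
  then have "(\<Sum>A\<in>Pow V. mu p A) = 0" by simp
  then show False using sum_mu[of p] by simp
qed

lemma H_eq: "u \<in> V \<Longrightarrow> 3 - H A u = (\<Sum>w\<in>nbr u. 1 - h (d - 1) A [w, u])"
  unfolding H_def using card_nbr by (simp add: sum_subtractf)

lemma H_le3: "u \<in> V \<Longrightarrow> H A u \<le> 3"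
proof -
  assume u: "u \<in> V"
  have "H A u \<le> of_nat (card (nbr u)) * 1" unfolding H_def
    by (rule sum_bounded_above) (use h_bounds good_start u in blast)
  then show ?thesis using card_nbr u by simp
qed

lemma dist_self: "u \<in> S \<Longrightarrow> u \<in> V \<Longrightarrow> dist_S V E S u u = 0"
proof -
  assume "u \<in> S" "u \<in> V"
  then have "S_path V E S u u [u]" unfolding S_path_def is_path_def by auto
  then have "dist_S V E S u u \<le> enat 0" unfolding dist_S_def
    by (metis (no_types, lifting) INF_lower One_nat_def diff_self_eq_0 length_Cons list.size(3) mem_Collect_eq)
  then have "dist_S V E S u u \<le> 0" by (simp add: zero_enat_def)
  then show ?thesis by simp
qed

lemma gamma_bound:
  assumes p0: "0 \<le> p" and p1: "p \<le> 1"
  shows "real (gamma_e V E) \<le> p * real (card V) + 3 / 2 * real (card V) * (1 - p) ^ d"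
proof -
  obtain A where A: "A \<subseteq> V" "real (card A) + (\<Sum>u\<in>V. g A u) \<le> p * real (card V) + 3 / 2 * real (card V) * (1 - p) ^ d"
    using exists_A[OF p0 p1] by blast
  define B where "B = {u\<in>V. u \<notin> A \<and> H A u < 1}"
  define S where "S = A \<union> B"
  have SV: "S \<subseteq> V" using A B_def S_def by auto
  have finS: "finite S" using SV finV finite_subset by blast
  have dom: "exp_dominating V E S" unfolding exp_dominating_def
  proof (intro conjI ballI SV)
    fix u assume u: "u \<in> V"
    show "1 \<le> weight_S V E S u"
    proof (cases "u \<in> S")
      case True
      have d0: "dist_S V E S u u = enat 0" using dist_self[OF True u] by (simp add: zero_enat_def)
      have "(1/2::real) powi (int 0 - 1) = 2" by (simp add: power_int_minus)
      then have "(case dist_S V E S u u of enat k \<Rightarrow> (1/2::real) powi (int k - 1) | \<infinity> \<Rightarrow> 0) = 2"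
        unfolding d0 by simp
      moreover have "(case dist_S V E S u u of enat k \<Rightarrow> (1/2::real) powi (int k - 1) | \<infinity> \<Rightarrow> 0)
          \<le> weight_S V E S u"
        unfolding weight_S_def
        by (rule member_le_sum[OF True _ finS]) (auto split: enat.splits)
      ultimately show ?thesis by simp
    next
      case False
      then have "u \<notin> A" "\<not> H A u < 1" using u unfolding S_def B_def by auto
      moreover have "H A u \<le> H S u" unfolding H_def
        by (rule sum_mono, rule h_mono) (use good_start u S_def in auto)
      moreover have "H S u \<le> weight_S V E S u" by (rule weight_ge_H[OF u False SV])
      ultimately show ?thesis by simp
    qed
  qed
  have "card B \<le> (\<Sum>u\<in>V. g A u)"
  proof -
    have "real (card B) = (\<Sum>u\<in>B. 1)" by simp
    also have "\<dots> \<le> (\<Sum>u\<in>B. g A u)"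
    proof (rule sum_mono)
      fix u assume "u \<in> B"
      then have "u \<in> V" "u \<notin> A" "H A u < 1" unfolding B_def by auto
      then show "1 \<le> g A u" unfolding g_def using H_eq[of u A] by simp
    qed
    also have "\<dots> \<le> (\<Sum>u\<in>V. g A u)"
    proof (rule sum_mono2[OF finV])
      show "B \<subseteq> V" unfolding B_def by auto
      fix u assume "u \<in> V - B"
      then show "0 \<le> g A u" unfolding g_def using H_eq[of u A] H_le3[of u A] by simp
    qed
    finally show ?thesis .
  qed
  moreover have "card S \<le> card A + card B" unfolding S_def by (rule card_Un_le)
  moreover have "gamma_e V E \<le> card S"
  proof -
    have "{card S | S. exp_dominating V E S} \<subseteq> card ` Pow V"
      unfolding exp_dominating_def by blast
    then have "finite {card S | S. exp_dominating V E S}" using finV finite_subset by blast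
    moreover have "card S \<in> {card S | S. exp_dominating V E S}" using dom by blast
    ultimately show ?thesis unfolding gamma_e_def by (rule Min_le)
  qed
  ultimately show ?thesis using A(2) by linarith
qed

end

theorem mainTheorem8:
  fixes V :: "'a set" and E :: "'a \<Rightarrow> 'a \<Rightarrow> bool" and d :: nat and p :: real
  assumes "simple_graph V E" and "cubic V E" and "girth_ge V E (2 * d + 1)"
    and "d \<ge> 1" and "0 \<le> p" and "p \<le> 1"
  shows "real (gamma_e V E) \<le> 3 / 2 * (p + exp (- p * real d)) * real (card V)"
proof -
  interpret cg V E d using assms by unfold_locales
  have g: "real (gamma_e V E) \<le> p * real (card V) + 3 / 2 * real (card V) * (1 - p) ^ d"
    by (rule gamma_bound) (use assms in auto)
  have "1 - p \<le> exp (- p)" using exp_ge_add_one_self[of "- p"] by simp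
  then have "(1 - p) ^ d \<le> exp (- p) ^ d" by (rule power_mono) (use assms in simp)
  also have "exp (- p) ^ d = exp (- p * real d)" using exp_of_nat_mult[of d "- p"] by (simp add: mult.commute)
  finally have e: "(1 - p) ^ d \<le> exp (- p * real d)" .
  have n0: "0 \<le> real (card V)" by simp
  have "p * real (card V) + 3 / 2 * real (card V) * (1 - p) ^ d
      \<le> 3 / 2 * p * real (card V) + 3 / 2 * real (card V) * exp (- p * real d)"
    using e n0 assms(5) by (intro add_mono mult_left_mono mult_right_mono) auto
  also have "\<dots> = 3 / 2 * (p + exp (- p * real d)) * real (card V)" by (simp add: algebra_simps)
  finally show ?thesis using g by linarith
qed

end
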